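(* Let $n\ge1$, let $\mathfrak{n}=\mathfrak{n}(n)$ be the Lie algebra defined in the context, and let $\operatorname{Der}(\mathfrak{n})_1$ be as in the context. Let $B=\{e'_1,\dots,e'_n\}$ be any basis of $E$ and let $\mathfrak{B}(B)$ be the associated ordered basis of $\mathfrak{n}$. If $D\in\operatorname{Der}(\mathfrak{n})_1$, then the matrix of $D$ in the ordered basis $\mathfrak{B}(B)$ is lower triangular, i.e. for every $w\in\mathfrak{B}(B)$, the coordinates of $D(w)$ with respect to $\mathfrak{B}(B)$ are zero on all basis vectors that precede $w$ in the order of $\mathfrak{B}(B)$.
   Context: Fix a field of characteristic zero and a positive integer $n$. The Lie algebra $\mathfrak{n}(n)$ has basis $e_1,\dots,e_n,a,b,x$; $u,y$; $e_i\wedge e_j$ ($1\le i<j\le n$); $c$; $x_1,\dots,x_n$; $u_1,\dots,u_n$; $y_1,\dots,y_n$; $f,h$. Its bracket is defined on basis elements by: $[e_i,e_j]=e_i\wedge e_j$ for $i<j$ (so $[e_j,e_i]=-e_i\wedge e_j$), $[e_i,x]=x_i$, $[e_i,u]=u_i$, $[e_i,y]=y_i$, $[a,b]=c$, $[a,y]=f$, $[a,c]=h$, $[b,u]=h$, $[b,y]=h$, $[x,u]=f$, $[x,y]=h$, extended by antisymmetry, and all other brackets of pairs of basis elements are zero. Let $E=\operatorname{span}\{e_1,\dots,e_n\}$ and let $W$ be the span of all the other basis vectors (so $\mathfrak{n}=E\oplus W$). Let $\operatorname{Der}(\mathfrak{n})_1$ be the set of derivations $D$ of $\mathfrak{n}$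 with $D(E)\subset W$. For a basis $B=\{e'_1,\dots,e'_n\}$ of $E$, put $x'_i=[e'_i,x]$, $u'_i=[e'_i,u]$, $y'_i=[e'_i,y]$, $e'_i\wedge e'_j=[e'_i,e'_j]$, and let $\mathfrak{B}(B)$ be the ordered basis $e'_1,\dots,e'_n,a,b,x,u,y,(e'_i\wedge e'_j)_{1\le i<j\le n}$ (lexicographic order), $c,x'_1,\dots,x'_n,u'_1,\dots,u'_n,y'_1,\dots,y'_n,f,h$. (For $B=\{e_1,\dots,e_n\}$ this is the original basis; for every $B$ the bracket relations above hold with primed elements in place of unprimed ones.) *)

theory Defs
  imports Main
begin

text \<open>Basis labels of the Lie algebra n(n). Indices of e_i, e_i wedge e_j, x_i, u_i, y_i
  are 1-based natural numbers.\<close>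
datatype bidx = Ee nat | Aa | Bb | Xx | Uu | Yy | Wedge nat nat | Cc
  | Xs nat | Us nat | Ys nat | Ff | Hh

type_synonym 'k vec = "bidx \<Rightarrow> 'k"

definition valid_idx :: "nat \<Rightarrow> bidx set" where
  "valid_idx n =
     {Ee i | i. 1 \<le> i \<and> i \<le> n} \<union> {Aa, Bb, Xx, Uu, Yy}
     \<union> {Wedge i j | i j. 1 \<le> i \<and> i < j \<and> j \<le> n} \<union> {Cc}
     \<union> {Xs i | i. 1 \<le> i \<and> i \<le> n} \<union> {Us i | i. 1 \<le> i \<and> i \<le> n}
     \<union> {Ys i | i. 1 \<le> i \<and> i \<le> n} \<union> {Ff, Hh}"

definition nspace :: "nat \<Rightarrow> ('k::field) vec set" where
  "nspace n = {v. \<forall>r. r \<notin> valid_idx n \<longrightarrow> v r = 0}"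

definition delta :: "bidx \<Rightarrow> ('k::field) vec" where
  "delta q = (\<lambda>r. if r = q then 1 else 0)"

text \<open>The listed brackets [p,q] (those with p before q in the defining list);
  all other ones are zero except the antisymmetric counterparts.\<close>
fun pos_br :: "bidx \<Rightarrow> bidx \<Rightarrow> ('k::field) vec" where
  "pos_br (Ee i) (Ee j) = (if i < j then delta (Wedge i j) else (\<lambda>_. 0))"
| "pos_br (Ee i) Xx = delta (Xs i)"
| "pos_br (Ee i) Uu = delta (Us i)"
| "pos_br (Ee i) Yy = delta (Ys i)"
| "pos_br Aa Bb = delta Cc"
| "pos_br Aa Yy = delta Ff"
| "pos_br Aa Cc = delta Hh"
| "pos_br Bb Uu = delta Hh"
| "pos_br Bb Yy = delta Hh"
| "pos_br Xx Uu = delta Ff"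
| "pos_br Xx Yy = delta Hh"
| "pos_br _ _ = (\<lambda>_. 0)"

definition basis_br :: "bidx \<Rightarrow> bidx \<Rightarrow> ('k::field) vec" where
  "basis_br p q = (\<lambda>r. pos_br p q r - pos_br q p r)"

definition lie :: "nat \<Rightarrow> ('k::field) vec \<Rightarrow> 'k vec \<Rightarrow> 'k vec" where
  "lie n v w = (\<lambda>r. \<Sum>p\<in>valid_idx n. \<Sum>q\<in>valid_idx n. v p * w q * basis_br p q r)"

definition vadd :: "('k::field) vec \<Rightarrow> 'k vec \<Rightarrow> 'k vec" where
  "vadd v w = (\<lambda>r. v r + w r)"

definition vscale :: "'k::field \<Rightarrow> 'k vec \<Rightarrow> 'k vec" where
  "vscale c v = (\<lambda>r. c * v r)"

definition is_derivation :: "nat \<Rightarrow> (('k::field) vec \<Rightarrow> 'k vec) \<Rightarrow> bool" where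
  "is_derivation n D \<longleftrightarrow>
     (\<forall>v\<in>nspace n. D v \<in> nspace n) \<and>
     (\<forall>v\<in>nspace n. \<forall>w\<in>nspace n. D (vadd v w) = vadd (D v) (D w)) \<and>
     (\<forall>c. \<forall>v\<in>nspace n. D (vscale c v) = vscale c (D v)) \<and>
     (\<forall>v\<in>nspace n. \<forall>w\<in>nspace n. D (lie n v w) = vadd (lie n (D v) w) (lie n v (D w)))"

definition Espace :: "nat \<Rightarrow> ('k::field) vec set" where
  "Espace n = {v \<in> nspace n. \<forall>r. (\<forall>i. r \<noteq> Ee i) \<longrightarrow> v r = 0}"

text \<open>Der(n)_1: derivations D with D(E) contained in W (W = span of all non-e basis vectors).\<close>
definition Der1 :: "nat \<Rightarrow> (('k::field) vec \<Rightarrow> 'k vec) set" where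
  "Der1 n = {D. is_derivation n D \<and> (\<forall>v\<in>Espace n. \<forall>i. D v (Ee i) = 0)}"

definition is_basis_E :: "nat \<Rightarrow> (nat \<Rightarrow> ('k::field) vec) \<Rightarrow> bool" where
  "is_basis_E n b \<longleftrightarrow>
     (\<forall>i\<in>{1..n}. b i \<in> Espace n) \<and>
     (\<forall>c. (\<lambda>r. \<Sum>i=1..n. c i * b i r) = (\<lambda>_. 0) \<longrightarrow> (\<forall>i\<in>{1..n}. c i = 0)) \<and>
     (\<forall>v\<in>Espace n. \<exists>c. v = (\<lambda>r. \<Sum>i=1..n. c i * b i r))"

definition frakB :: "nat \<Rightarrow> (nat \<Rightarrow> ('k::field) vec) \<Rightarrow> 'k vec list" where
  "frakB n b =
     map b [1..<n+1]
     @ [delta Aa, delta Bb, delta Xx, delta Uu, delta Yy]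
     @ [lie n (b i) (b j). i \<leftarrow> [1..<n+1], j \<leftarrow> [i+1..<n+1]]
     @ [delta Cc]
     @ map (\<lambda>i. lie n (b i) (delta Xx)) [1..<n+1]
     @ map (\<lambda>i. lie n (b i) (delta Uu)) [1..<n+1]
     @ map (\<lambda>i. lie n (b i) (delta Yy)) [1..<n+1]
     @ [delta Ff, delta Hh]"

end

theory Submission
  imports Defs
begin
fun out :: "bidx \<Rightarrow> bidx \<Rightarrow> bidx option" where
  "out (Ee i) (Ee j) = (if i < j then Some (Wedge i j) else None)"
| "out (Ee i) Xx = Some (Xs i)"
| "out (Ee i) Uu = Some (Us i)"
| "out (Ee i) Yy = Some (Ys i)"
| "out Aa Bb = Some Cc"
| "out Aa Yy = Some Ff"
| "out Aa Cc = Some Hh"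
| "out Bb Uu = Some Hh"
| "out Bb Yy = Some Hh"
| "out Xx Uu = Some Ff"
| "out Xx Yy = Some Hh"
| "out _ _ = None"

fun pre :: "bidx \<Rightarrow> (bidx \<times> bidx) set" where
  "pre (Wedge i j) = (if i < j then {(Ee i, Ee j)} else {})"
| "pre (Xs i) = {(Ee i, Xx)}"
| "pre (Us i) = {(Ee i, Uu)}"
| "pre (Ys i) = {(Ee i, Yy)}"
| "pre Cc = {(Aa, Bb)}"
| "pre Ff = {(Aa, Yy), (Xx, Uu)}"
| "pre Hh = {(Aa, Cc), (Bb, Uu), (Bb, Yy), (Xx, Yy)}"
| "pre _ = {}"

lemma pos_br_out: "pos_br p q = (case out p q of Some s \<Rightarrow> delta s | None \<Rightarrow> (\<lambda>_. 0))"
  by (cases p; cases q) simp_all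

lemma out_pre1: "out p q = Some r \<Longrightarrow> (p,q) \<in> pre r"
  by (cases p; cases q) (auto split: if_splits)

lemma out_pre2: "(p,q) \<in> pre r \<Longrightarrow> out p q = Some r"
  by (cases r) (auto split: if_splits)

lemma out_pre: "(p,q) \<in> pre r \<longleftrightarrow> out p q = Some r" using out_pre1 out_pre2 by blast

lemma pos_br_pre: "pos_br p q r = (if (p,q) \<in> pre r then 1 else 0)"
  by (cases "out p q") (auto simp: pos_br_out out_pre delta_def)

lemma finite_pre: "finite (pre r)" by (cases r) auto

lemma valid_simps[simp]:
  "Ee i \<in> valid_idx n \<longleftrightarrow> 1 \<le> i \<and> i \<le> n"
  "Aa \<in> valid_idx n" "Bb \<in> valid_idx n" "Xx \<in> valid_idx n" "Uu \<in> valid_idx n" "Yy \<in> valid_idx n"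
  "Cc \<in> valid_idx n" "Ff \<in> valid_idx n" "Hh \<in> valid_idx n"
  "Wedge i j \<in> valid_idx n \<longleftrightarrow> 1 \<le> i \<and> i < j \<and> j \<le> n"
  "Xs i \<in> valid_idx n \<longleftrightarrow> 1 \<le> i \<and> i \<le> n"
  "Us i \<in> valid_idx n \<longleftrightarrow> 1 \<le> i \<and> i \<le> n"
  "Ys i \<in> valid_idx n \<longleftrightarrow> 1 \<le> i \<and> i \<le> n"
  by (simp_all add: valid_idx_def)
lemma finite_valid: "finite (valid_idx n)"
proof -
  have "valid_idx n \<subseteq> Ee ` {..n} \<union> {Aa,Bb,Xx,Uu,Yy,Cc,Ff,Hh} \<union> (\<lambda>(i,j). Wedge i j) ` ({..n}\<times>{..n})
     \<union> Xs ` {..n} \<union> Us ` {..n} \<union> Ys ` {..n}"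
    by (auto simp: valid_idx_def)
  thus ?thesis by (rule finite_subset) auto
qed

lemma pre_valid: "r \<in> valid_idx n \<Longrightarrow> pre r \<subseteq> valid_idx n \<times> valid_idx n"
  by (cases r) auto

lemma pre_out: "(p,q) \<in> pre r \<Longrightarrow> p \<in> valid_idx n \<Longrightarrow> q \<in> valid_idx n \<Longrightarrow> r \<in> valid_idx n"
  by (cases r) (auto split: if_splits)

definition lieF :: "('k::field) vec \<Rightarrow> 'k vec \<Rightarrow> bidx \<Rightarrow> 'k" where
  "lieF v w r = (\<Sum>(p,q)\<in>pre r. v p * w q) - (\<Sum>(p,q)\<in>pre r. v q * w p)"

lemma dsum_pre:
  assumes "pre r \<subseteq> valid_idx n \<times> valid_idx n"
  shows "(\<Sum>p\<in>valid_idx n. \<Sum>q\<in>valid_idx n. (f p q::'k::field) * (if (p,q) \<in> pre r then 1 else 0))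
     = (\<Sum>(p,q)\<in>pre r. f p q)"
proof -
  have "(\<Sum>p\<in>valid_idx n. \<Sum>q\<in>valid_idx n. f p q * (if (p,q) \<in> pre r then 1 else 0))
     = (\<Sum>x\<in>valid_idx n \<times> valid_idx n. (if x \<in> pre r then f (fst x) (snd x) else 0))"
    by (subst sum.cartesian_product) (auto intro!: sum.cong)
  also have "\<dots> = (\<Sum>x\<in>(valid_idx n \<times> valid_idx n) \<inter> pre r. f (fst x) (snd x))"
    by (rule sum.inter_restrict[symmetric]) (simp add: finite_valid)
  also have "(valid_idx n \<times> valid_idx n) \<inter> pre r = pre r" using assms by blast
  finally show ?thesis by (simp add: case_prod_beta')
qed

lemma lie_valid: "r \<in> valid_idx n \<Longrightarrow> lie n v w r = lieF v w r"
proof -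
  assume r: "r \<in> valid_idx n"
  have "lie n v w r = (\<Sum>p\<in>valid_idx n. \<Sum>q\<in>valid_idx n. v p * w q * (if (p,q) \<in> pre r then 1 else 0))
     - (\<Sum>p\<in>valid_idx n. \<Sum>q\<in>valid_idx n. v p * w q * (if (q,p) \<in> pre r then 1 else 0))"
    by (simp add: lie_def basis_br_def pos_br_pre right_diff_distrib sum_subtractf)
  also have "(\<Sum>p\<in>valid_idx n. \<Sum>q\<in>valid_idx n. v p * w q * (if (q,p) \<in> pre r then 1 else 0))
     = (\<Sum>q\<in>valid_idx n. \<Sum>p\<in>valid_idx n. v p * w q * (if (q,p) \<in> pre r then 1 else 0))"
    by (rule sum.swap)
  also have "\<dots> = (\<Sum>(q,p)\<in>pre r. v p * w q)"
    using dsum_pre[OF pre_valid[OF r], of "\<lambda>q p. v p * w q"] by (simp add: mult.commute mult.left_commute)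
  also have "(\<Sum>p\<in>valid_idx n. \<Sum>q\<in>valid_idx n. v p * w q * (if (p,q) \<in> pre r then 1 else 0))
     = (\<Sum>(p,q)\<in>pre r. v p * w q)"
    using dsum_pre[OF pre_valid[OF r], of "\<lambda>p q. v p * w q"] by simp
  finally show ?thesis by (simp add: lieF_def)
qed

lemma lie_invalid: "r \<notin> valid_idx n \<Longrightarrow> lie n v w r = 0"
  unfolding lie_def basis_br_def
  by (rule sum.neutral, rule ballI, rule sum.neutral, rule ballI)
     (auto simp: pos_br_pre dest: pre_out)

lemma lie_at: "lie n v w r = (if r \<in> valid_idx n then lieF v w r else 0)"
  by (simp add: lie_valid lie_invalid)

lemma lie_nspace: "lie n v w \<in> nspace n"
  by (simp add: nspace_def lie_invalid)

lemma delta_nspace: "s \<in> valid_idx n \<Longrightarrow> delta s \<in> nspace n"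
  by (auto simp: nspace_def delta_def)

lemma sum_pre_delta1: "(\<Sum>(x,y)\<in>pre r. delta a x * delta b y) = (if (a,b) \<in> pre r then (1::'k::field) else 0)"
proof -
  have "(\<Sum>(x,y)\<in>pre r. delta a x * delta b y) = (\<Sum>z\<in>pre r. if (a,b) = z then (1::'k) else 0)"
    by (rule sum.cong) (auto simp: delta_def split: if_splits)
  thus ?thesis by (simp add: finite_pre)
qed

lemma sum_pre_delta2: "(\<Sum>(x,y)\<in>pre r. delta a y * delta b x) = (if (b,a) \<in> pre r then (1::'k::field) else 0)"
proof -
  have "(\<Sum>(x,y)\<in>pre r. delta a y * delta b x) = (\<Sum>z\<in>pre r. if (b,a) = z then (1::'k) else 0)"
    by (rule sum.cong) (auto simp: delta_def split: if_splits)
  thus ?thesis by (simp add: finite_pre)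
qed

lemma lie_delta: "p \<in> valid_idx n \<Longrightarrow> q \<in> valid_idx n \<Longrightarrow> lie n (delta p) (delta q) = (basis_br p q :: ('k::field) vec)"
proof (rule ext)
  fix r assume p: "p \<in> valid_idx n" and q: "q \<in> valid_idx n"
  show "lie n (delta p) (delta q) r = basis_br p q r"
  proof (cases "r \<in> valid_idx n")
    case True thus ?thesis
      by (simp add: lie_valid lieF_def basis_br_def pos_br_pre sum_pre_delta1 sum_pre_delta2)
  next
    case False thus ?thesis using p q by (auto simp: lie_invalid basis_br_def pos_br_pre dest: pre_out)
  qed
qed

lemma lie_antisym: "lie n v w r = - lie n w v r"
  by (simp add: lie_at lieF_def mult.commute)

definition Wl :: "nat \<Rightarrow> (nat \<Rightarrow> ('k::field) vec) \<Rightarrow> 'k vec list" where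
  "Wl n b = [lie n (b i) (b j). i \<leftarrow> [1..<n+1], j \<leftarrow> [i+1..<n+1]]"

definition PP :: "nat \<Rightarrow> (nat \<Rightarrow> ('k::field) vec) \<Rightarrow> nat" where
  "PP n b = n + 5 + length (Wl n b)"

lemma frakB_eq: "frakB n b = map b [1..<n+1]
     @ [delta Aa, delta Bb, delta Xx, delta Uu, delta Yy]
     @ Wl n b
     @ [delta Cc]
     @ map (\<lambda>i. lie n (b i) (delta Xx)) [1..<n+1]
     @ map (\<lambda>i. lie n (b i) (delta Uu)) [1..<n+1]
     @ map (\<lambda>i. lie n (b i) (delta Yy)) [1..<n+1]
     @ [delta Ff, delta Hh]"
  by (simp add: frakB_def Wl_def)

lemma len_frakB: "length (frakB n b) = PP n b + 3*n + 3"
  by (simp add: frakB_eq PP_def del: upt_Suc)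

lemma L_e: "k < n \<Longrightarrow> frakB n b ! k = b (k+1)"
  by (simp add: frakB_eq nth_append del: upt_Suc)

lemma L_A: "frakB n b ! n = delta Aa" "frakB n b ! (n+1) = delta Bb" "frakB n b ! (n+2) = delta Xx"
  "frakB n b ! (n+3) = delta Uu" "frakB n b ! (n+4) = delta Yy"
  by (simp_all add: frakB_eq nth_append del: upt_Suc)

lemma L_W: "t < length (Wl n b) \<Longrightarrow> frakB n b ! (n+5+t) = Wl n b ! t"
  by (auto simp: frakB_eq nth_append PP_def simp del: upt_Suc)

lemma L_C: "frakB n b ! PP n b = delta Cc"
  by (auto simp: frakB_eq nth_append PP_def simp del: upt_Suc)

definition XL :: "nat \<Rightarrow> (nat \<Rightarrow> ('k::field) vec) \<Rightarrow> bidx \<Rightarrow> 'k vec list" where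
  "XL n b z = map (\<lambda>i. lie n (b i) (delta z)) [1..<n+1]"

lemma len_XL[simp]: "length (XL n b z) = n" by (simp add: XL_def)

lemma XL_nth: "1 \<le> i \<Longrightarrow> i \<le> n \<Longrightarrow> XL n b z ! (i - 1) = lie n (b i) (delta z)"
  by (auto simp: XL_def nth_upt simp del: upt_Suc)

lemma frakB_split: "frakB n b = (map b [1..<n+1]
     @ [delta Aa, delta Bb, delta Xx, delta Uu, delta Yy] @ Wl n b @ [delta Cc])
     @ (XL n b Xx @ (XL n b Uu @ (XL n b Yy @ [delta Ff, delta Hh])))"
  by (simp add: frakB_eq XL_def del: upt_Suc)

lemma frakB_rest: "frakB n b ! (PP n b + 1 + t) = (XL n b Xx @ (XL n b Uu @ (XL n b Yy @ [delta Ff, delta Hh]))) ! t"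
proof -
  have "PP n b + 1 + t = length (map b [1..<n+1]
     @ [delta Aa, delta Bb, delta Xx, delta Uu, delta Yy] @ Wl n b @ [delta Cc]) + t"
    by (simp add: PP_def del: upt_Suc)
  thus ?thesis by (simp only: frakB_split nth_append_length_plus)
qed

lemma L_X: "1 \<le> i \<Longrightarrow> i \<le> n \<Longrightarrow> frakB n b ! (PP n b + i) = lie n (b i) (delta Xx)"
  using frakB_rest[of n b "i - 1"] XL_nth[of i n b Xx] by (auto simp: nth_append)

lemma L_U: "1 \<le> i \<Longrightarrow> i \<le> n \<Longrightarrow> frakB n b ! (PP n b + n + i) = lie n (b i) (delta Uu)"
proof -
  assume i: "1 \<le> i" "i \<le> n"
  have "frakB n b ! (PP n b + n + i) = (XL n b Xx @ (XL n b Uu @ (XL n b Yy @ [delta Ff, delta Hh]))) ! (length (XL n b Xx) + (i - 1))"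
    using frakB_rest[of n b "n + (i - 1)"] i by (simp add: add.assoc)
  also have "\<dots> = XL n b Uu ! (i - 1)" using i by (simp only: nth_append_length_plus) (auto simp: nth_append)
  finally show ?thesis using XL_nth[OF i] by simp
qed

lemma L_Y: "1 \<le> i \<Longrightarrow> i \<le> n \<Longrightarrow> frakB n b ! (PP n b + 2*n + i) = lie n (b i) (delta Yy)"
proof -
  assume i: "1 \<le> i" "i \<le> n"
  have "frakB n b ! (PP n b + 2*n + i) = (XL n b Xx @ (XL n b Uu @ (XL n b Yy @ [delta Ff, delta Hh]))) ! (length (XL n b Xx) + (length (XL n b Uu) + (i - 1)))"
    using frakB_rest[of n b "n + (n + (i - 1))"] i by (simp add: add.assoc mult_2)
  also have "\<dots> = XL n b Yy ! (i - 1)" using i by (simp only: nth_append_length_plus) (auto simp: nth_append)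
  finally show ?thesis using XL_nth[OF i] by simp
qed

lemma L_F: "frakB n b ! (PP n b + 3*n + 1) = delta Ff"
proof -
  have "frakB n b ! (PP n b + 3*n + 1) = (XL n b Xx @ (XL n b Uu @ (XL n b Yy @ [delta Ff, delta Hh]))) ! (length (XL n b Xx) + (length (XL n b Uu) + (length (XL n b Yy) + 0)))"
    using frakB_rest[of n b "n + (n + n)"] by (simp add: add.assoc eval_nat_numeral)
  also have "\<dots> = delta Ff" by (simp only: nth_append_length_plus) simp
  finally show ?thesis .
qed

lemma L_H: "frakB n b ! (PP n b + 3*n + 2) = delta Hh"
proof -
  have "frakB n b ! (PP n b + 3*n + 2) = (XL n b Xx @ (XL n b Uu @ (XL n b Yy @ [delta Ff, delta Hh]))) ! (length (XL n b Xx) + (length (XL n b Uu) + (length (XL n b Yy) + 1)))"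
    using frakB_rest[of n b "n + (n + n) + 1"] by (simp add: add.assoc eval_nat_numeral)
  also have "\<dots> = delta Hh" by (simp only: nth_append_length_plus) simp
  finally show ?thesis .
qed

lemma Wl_mem: "1 \<le> i \<Longrightarrow> i < j \<Longrightarrow> j \<le> n \<Longrightarrow> \<exists>k. n+5 \<le> k \<and> k < PP n b \<and> frakB n b ! k = lie n (b i) (b j)"
proof -
  assume a: "1 \<le> i" "i < j" "j \<le> n"
  have "lie n (b i) (b j) \<in> set (Wl n b)"
    apply (simp add: Wl_def del: upt_Suc)
    apply (rule bexI[of _ i])
     apply (rule image_eqI[of _ _ j])
    using a apply auto
    done
  then obtain t where t: "t < length (Wl n b)" "Wl n b ! t = lie n (b i) (b j)" by (auto simp: in_set_conv_nth)
  have "frakB n b ! (n+5+t) = lie n (b i) (b j)" using L_W[OF t(1)] t(2) by simp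
  moreover have "n+5+t < PP n b" using t(1) by (simp add: PP_def)
  ultimately show ?thesis by (intro exI[of _ "n+5+t"]) simp
qed

lemma Wl_set: "x \<in> set (Wl n b) \<Longrightarrow> \<exists>i j. 1 \<le> i \<and> i < j \<and> j \<le> n \<and> x = lie n (b i) (b j)"
proof -
  assume "x \<in> set (Wl n b)"
  then obtain i j where "i \<in> {1..<n+1}" "j \<in> {i+1..<n+1}" "x = lie n (b i) (b j)"
    by (auto simp: Wl_def simp del: upt_Suc)
  thus ?thesis by (intro exI[of _ i] exI[of _ j]) auto
qed

definition sf :: "nat \<Rightarrow> (nat \<Rightarrow> ('k::field) vec) \<Rightarrow> nat \<Rightarrow> 'k vec set" where
  "sf n b k = {v. \<exists>c. v = (\<lambda>r. \<Sum>j\<in>{k..<length (frakB n b)}. c j * (frakB n b ! j) r)}"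

lemma sf_zero: "(\<lambda>_. 0) \<in> sf n b k"
  unfolding sf_def by (rule CollectI, rule exI[of _ "\<lambda>_. 0"]) simp

lemma sf_add: "v \<in> sf n b k \<Longrightarrow> w \<in> sf n b k \<Longrightarrow> (\<lambda>r. v r + w r) \<in> sf n b k"
  unfolding sf_def
proof (clarify)
  fix c d
  show "\<exists>e. (\<lambda>r. (\<Sum>j\<in>{k..<length (frakB n b)}. c j * (frakB n b ! j) r) + (\<Sum>j\<in>{k..<length (frakB n b)}. d j * (frakB n b ! j) r))
     = (\<lambda>r. \<Sum>j\<in>{k..<length (frakB n b)}. e j * (frakB n b ! j) r)"
    by (rule exI[of _ "\<lambda>j. c j + d j"]) (simp add: sum.distrib distrib_right)
qed

lemma sf_scale: "v \<in> sf n b k \<Longrightarrow> (\<lambda>r. a * v r) \<in> sf n b k"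
  unfolding sf_def
proof (clarify)
  fix c
  show "\<exists>e. (\<lambda>r. a * (\<Sum>j\<in>{k..<length (frakB n b)}. c j * (frakB n b ! j) r))
     = (\<lambda>r. \<Sum>j\<in>{k..<length (frakB n b)}. e j * (frakB n b ! j) r)"
    by (rule exI[of _ "\<lambda>j. a * c j"]) (simp add: sum_distrib_left mult.assoc)
qed

lemma sf_sum: "finite S \<Longrightarrow> (\<And>s. s \<in> S \<Longrightarrow> f s \<in> sf n b k) \<Longrightarrow> (\<lambda>r. \<Sum>s\<in>S. f s r) \<in> sf n b k"
proof (induction S rule: finite_induct)
  case empty thus ?case by (simp add: sf_zero)
next
  case (insert x F) thus ?case using sf_add[of "f x" n b k "\<lambda>r. \<Sum>s\<in>F. f s r"] by simp
qed

lemma sf_basis: "k \<le> j \<Longrightarrow> j < length (frakB n b) \<Longrightarrow> frakB n b ! j \<in> sf n b k"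
  unfolding sf_def
proof (rule CollectI, rule exI[of _ "\<lambda>i. if i = j then 1 else 0"], rule ext)
  fix r assume "k \<le> j" "j < length (frakB n b)"
  thus "(frakB n b ! j) r = (\<Sum>i\<in>{k..<length (frakB n b)}. (if i = j then 1 else 0) * (frakB n b ! i) r)"
  proof -
    have "(\<Sum>i\<in>{k..<length (frakB n b)}. (if i = j then 1 else 0) * (frakB n b ! i) r)
       = (\<Sum>i\<in>{k..<length (frakB n b)}. if i = j then (frakB n b ! j) r else 0)"
      by (rule sum.cong) auto
    thus ?thesis using \<open>k \<le> j\<close> \<open>j < length (frakB n b)\<close> by simp
  qed
qed

lemma sf_mono: "k \<le> k' \<Longrightarrow> v \<in> sf n b k' \<Longrightarrow> v \<in> sf n b k"
  unfolding sf_def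
proof (clarify)
  fix c assume kk: "k \<le> k'"
  let ?N = "length (frakB n b)"
  show "\<exists>e. (\<lambda>r. \<Sum>j\<in>{k'..<?N}. c j * (frakB n b ! j) r) = (\<lambda>r. \<Sum>j\<in>{k..<?N}. e j * (frakB n b ! j) r)"
  proof (rule exI[of _ "\<lambda>j. if j < k' then 0 else c j"], rule ext)
    fix r
    have "(\<Sum>j\<in>{k..<?N}. (if j < k' then 0 else c j) * (frakB n b ! j) r)
       = (\<Sum>j\<in>{k'..<?N}. (if j < k' then 0 else c j) * (frakB n b ! j) r)"
    proof (rule sum.mono_neutral_right)
      show "finite {k..<?N}" by simp
      show "{k'..<?N} \<subseteq> {k..<?N}" using kk by (simp add: subset_iff)
      show "\<forall>i\<in>{k..<?N} - {k'..<?N}. (if i < k' then 0 else c i) * (frakB n b ! i) r = 0"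
        by auto
    qed
    also have "\<dots> = (\<Sum>j\<in>{k'..<?N}. c j * (frakB n b ! j) r)" by (rule sum.cong) auto
    finally show "(\<Sum>j\<in>{k'..<?N}. c j * (frakB n b ! j) r) = (\<Sum>j\<in>{k..<?N}. (if j < k' then 0 else c j) * (frakB n b ! j) r)" by simp
  qed
qed

lemma vec_decomp: "v \<in> nspace n \<Longrightarrow> v = (\<lambda>r. \<Sum>s\<in>valid_idx n. v s * delta s r)"
proof (rule ext)
  fix r assume v: "v \<in> nspace n"
  show "v r = (\<Sum>s\<in>valid_idx n. v s * delta s r)"
  proof (cases "r \<in> valid_idx n")
    case True
    have "(\<Sum>s\<in>valid_idx n. v s * delta s r) = (\<Sum>s\<in>valid_idx n. if s = r then v s else 0)"
      by (rule sum.cong) (auto simp: delta_def)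
    thus ?thesis using True by (simp add: finite_valid)
  next
    case False
    have "(\<Sum>s\<in>valid_idx n. v s * delta s r) = 0"
      by (rule sum.neutral) (use False in \<open>auto simp: delta_def\<close>)
    thus ?thesis using v False by (simp add: nspace_def)
  qed
qed

lemma sf_support: "v \<in> nspace n \<Longrightarrow> (\<And>s. s \<in> valid_idx n \<Longrightarrow> v s \<noteq> 0 \<Longrightarrow> delta s \<in> sf n b k) \<Longrightarrow> v \<in> sf n b k"
proof -
  assume v: "v \<in> nspace n" and h: "\<And>s. s \<in> valid_idx n \<Longrightarrow> v s \<noteq> 0 \<Longrightarrow> delta s \<in> sf n b k"
  have "(\<lambda>r. \<Sum>s\<in>valid_idx n. v s * delta s r) \<in> sf n b k"
  proof (rule sf_sum[OF finite_valid])
    fix s assume s: "s \<in> valid_idx n"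
    show "(\<lambda>r. v s * delta s r) \<in> sf n b k"
    proof (cases "v s = 0")
      case True thus ?thesis using sf_zero by simp
    next
      case False thus ?thesis using h[OF s] sf_scale by blast
    qed
  qed
  thus ?thesis using vec_decomp[OF v] by simp
qed

lemma lie_sum_left: "lie n (\<lambda>r. \<Sum>i\<in>I. c i * u i r) w = (\<lambda>r. \<Sum>i\<in>I. c i * lie n (u i) w r)"
proof (rule ext)
  fix r
  have "lie n (\<lambda>r. \<Sum>i\<in>I. c i * u i r) w r
     = (\<Sum>p\<in>valid_idx n. \<Sum>q\<in>valid_idx n. \<Sum>i\<in>I. c i * (u i p * w q * basis_br p q r))"
    by (simp add: lie_def sum_distrib_right mult.assoc)
  also have "\<dots> = (\<Sum>p\<in>valid_idx n. \<Sum>i\<in>I. \<Sum>q\<in>valid_idx n. c i * (u i p * w q * basis_br p q r))"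
    by (rule sum.cong[OF refl], rule sum.swap)
  also have "\<dots> = (\<Sum>i\<in>I. \<Sum>p\<in>valid_idx n. \<Sum>q\<in>valid_idx n. c i * (u i p * w q * basis_br p q r))"
    by (rule sum.swap)
  also have "\<dots> = (\<Sum>i\<in>I. c i * lie n (u i) w r)"
    by (simp add: lie_def sum_distrib_left)
  finally show "lie n (\<lambda>r. \<Sum>i\<in>I. c i * u i r) w r = (\<Sum>i\<in>I. c i * lie n (u i) w r)" .
qed

lemma lie_self: "lie n v v = (\<lambda>_. 0)"
  by (rule ext) (simp add: lie_at lieF_def mult.commute)

lemma Esp_zero:
  assumes "e \<in> Espace n"
  shows "e Aa = 0" "e Bb = 0" "e Xx = 0" "e Uu = 0" "e Yy = 0" "e Cc = 0" "e Ff = 0" "e Hh = 0"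
    "e (Wedge p q) = 0" "e (Xs p) = 0" "e (Us p) = 0" "e (Ys p) = 0"
  using assms by (simp_all add: Espace_def)

lemma delta_Ee_Esp: "delta (Ee p) \<in> Espace n \<longleftrightarrow> 1 \<le> p \<and> p \<le> n"
  by (auto simp: Espace_def nspace_def delta_def)

lemma basis_Esp: "is_basis_E n b \<Longrightarrow> 1 \<le> i \<Longrightarrow> i \<le> n \<Longrightarrow> b i \<in> Espace n"
  by (simp add: is_basis_E_def)

lemma Esp_nspace: "e \<in> Espace n \<Longrightarrow> e \<in> nspace n"
  by (simp add: Espace_def)

lemma lenB: "length (frakB n b) = PP n b + 3*n + 3" by (rule len_frakB)

lemma lie_delta_sf:
  assumes bas: "is_basis_E n b" and p: "1 \<le> p" "p \<le> n"
    and h: "\<And>i. 1 \<le> i \<Longrightarrow> i \<le> n \<Longrightarrow> lie n (b i) w \<in> sf n b k"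
  shows "lie n (delta (Ee p)) w \<in> sf n b k"
proof -
  have "delta (Ee p) \<in> Espace n" using p by (simp add: delta_Ee_Esp)
  then obtain c where c: "delta (Ee p) = (\<lambda>r. \<Sum>i=1..n. c i * b i r)"
    using bas unfolding is_basis_E_def by blast
  have "lie n (delta (Ee p)) w = (\<lambda>r. \<Sum>i=1..n. c i * lie n (b i) w r)"
    by (simp only: c lie_sum_left)
  also have "\<dots> \<in> sf n b k"
    by (rule sf_sum) (auto intro!: sf_scale h)
  finally show ?thesis .
qed

lemma bb_sf:
  assumes bas: "is_basis_E n b" and "1 \<le> i" "i \<le> n" "1 \<le> j" "j \<le> n"
  shows "lie n (b i) (b j) \<in> sf n b (n+5)"
proof (cases "i < j")
  case True
  then obtain k where k: "n+5 \<le> k" "k < PP n b" "frakB n b ! k = lie n (b i) (b j)"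
    using Wl_mem assms by blast
  thus ?thesis using sf_basis[of "n+5" k n b] by (simp add: lenB)
next
  case False
  show ?thesis
  proof (cases "i = j")
    case True thus ?thesis by (simp add: lie_self sf_zero)
  next
    case False
    hence "j < i" using \<open>\<not> i < j\<close> by simp
    then obtain k where k: "n+5 \<le> k" "k < PP n b" "frakB n b ! k = lie n (b j) (b i)"
      using Wl_mem assms by blast
    hence "lie n (b j) (b i) \<in> sf n b (n+5)" using sf_basis[of "n+5" k n b] by (simp add: lenB)
    hence "(\<lambda>r. (-1) * lie n (b j) (b i) r) \<in> sf n b (n+5)" by (rule sf_scale)
    moreover have "(\<lambda>r. (-1) * lie n (b j) (b i) r) = lie n (b i) (b j)"
      by (rule ext) (simp add: lie_antisym[of n "b i"])
    ultimately show ?thesis by simp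
  qed
qed

lemma delta_Wedge_sf:
  fixes b :: "nat \<Rightarrow> ('k::field) vec"
  assumes bas: "is_basis_E n b" and pq: "1 \<le> p" "p < q" "q \<le> n"
  shows "delta (Wedge p q) \<in> sf n b (n+5)"
proof -
  have eq: "(delta (Wedge p q) :: 'k vec) = lie n (delta (Ee p)) (delta (Ee q))"
    using pq by (subst lie_delta) (auto simp: basis_br_def delta_def)
  have "lie n (delta (Ee p)) (delta (Ee q)) \<in> sf n b (n+5)"
  proof (rule lie_delta_sf[OF bas])
    fix i assume i: "1 \<le> i" "i \<le> n"
    have "lie n (delta (Ee q)) (b i) \<in> sf n b (n+5)"
      by (rule lie_delta_sf[OF bas]) (use pq i in \<open>auto intro: bb_sf[OF bas]\<close>)
    hence "(\<lambda>r. (-1) * lie n (delta (Ee q)) (b i) r) \<in> sf n b (n+5)" by (rule sf_scale)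
    moreover have "(\<lambda>r. (-1) * lie n (delta (Ee q)) (b i) r) = lie n (b i) (delta (Ee q))"
      by (rule ext) (simp add: lie_antisym[of n "b i"])
    ultimately show "lie n (b i) (delta (Ee q)) \<in> sf n b (n+5)" by simp
  qed (use pq in auto)
  thus ?thesis using eq by simp
qed

lemma delta_XUY_sf:
  assumes bas: "is_basis_E n b" and p: "1 \<le> p" "p \<le> n"
  shows "delta (Xs p) \<in> sf n b (PP n b + 1)" "delta (Us p) \<in> sf n b (PP n b + 1)"
    "delta (Ys p) \<in> sf n b (PP n b + 1)"
proof -
  have e1: "delta (Xs p) = lie n (delta (Ee p)) (delta Xx)"
    using p by (subst lie_delta) (auto simp: basis_br_def)
  have e2: "delta (Us p) = lie n (delta (Ee p)) (delta Uu)"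
    using p by (subst lie_delta) (auto simp: basis_br_def)
  have e3: "delta (Ys p) = lie n (delta (Ee p)) (delta Yy)"
    using p by (subst lie_delta) (auto simp: basis_br_def)
  show "delta (Xs p) \<in> sf n b (PP n b + 1)" unfolding e1
    by (rule lie_delta_sf[OF bas p]) (auto simp: L_X[symmetric] lenB intro!: sf_basis)
  show "delta (Us p) \<in> sf n b (PP n b + 1)" unfolding e2
    by (rule lie_delta_sf[OF bas p]) (auto simp: L_U[symmetric] lenB intro!: sf_basis)
  show "delta (Ys p) \<in> sf n b (PP n b + 1)" unfolding e3
    by (rule lie_delta_sf[OF bas p]) (auto simp: L_Y[symmetric] lenB intro!: sf_basis)
qed

definition lev :: "nat \<Rightarrow> (nat \<Rightarrow> ('k::field) vec) \<Rightarrow> bidx \<Rightarrow> nat" where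
  "lev n b s = (case s of Ee _ \<Rightarrow> 0 | Aa \<Rightarrow> n | Bb \<Rightarrow> n+1 | Xx \<Rightarrow> n+2 | Uu \<Rightarrow> n+3 | Yy \<Rightarrow> n+4
     | Wedge _ _ \<Rightarrow> n+5 | Cc \<Rightarrow> PP n b | Xs _ \<Rightarrow> PP n b + 1 | Us _ \<Rightarrow> PP n b + 1 | Ys _ \<Rightarrow> PP n b + 1
     | Ff \<Rightarrow> PP n b + 3*n + 1 | Hh \<Rightarrow> PP n b + 3*n + 2)"

lemma delta_sf:
  assumes bas: "is_basis_E n b" and s: "s \<in> valid_idx n" "\<forall>i. s \<noteq> Ee i" and k: "k \<le> lev n b s"
  shows "delta s \<in> sf n b k"
proof -
  have PPn: "n + 5 \<le> PP n b" by (simp add: PP_def)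
  have "delta s \<in> sf n b (lev n b s)"
  proof (cases s)
    case (Ee i) thus ?thesis using s by simp
  next
    case Aa thus ?thesis using sf_basis[of n n n b] PPn by (simp add: lev_def L_A[simplified] lenB)
  next
    case Bb thus ?thesis using sf_basis[of "n+1" "n+1" n b] PPn by (simp add: lev_def L_A[simplified] lenB)
  next
    case Xx thus ?thesis using sf_basis[of "n+2" "n+2" n b] PPn by (simp add: lev_def L_A[simplified] lenB)
  next
    case Uu thus ?thesis using sf_basis[of "n+3" "n+3" n b] PPn by (simp add: lev_def L_A[simplified] lenB)
  next
    case Yy thus ?thesis using sf_basis[of "n+4" "n+4" n b] PPn by (simp add: lev_def L_A[simplified] lenB)
  next
    case (Wedge p q) thus ?thesis using s delta_Wedge_sf[OF bas] by (simp add: lev_def)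
  next
    case Cc thus ?thesis using sf_basis[of "PP n b" "PP n b" n b] by (simp add: lev_def L_C lenB)
  next
    case (Xs p) thus ?thesis using s delta_XUY_sf[OF bas] by (simp add: lev_def)
  next
    case (Us p) thus ?thesis using s delta_XUY_sf[OF bas] by (simp add: lev_def)
  next
    case (Ys p) thus ?thesis using s delta_XUY_sf[OF bas] by (simp add: lev_def)
  next
    case Ff thus ?thesis using sf_basis[of "PP n b + 3*n+1" "PP n b + 3*n+1" n b] by (simp add: lev_def L_F[simplified] lenB)
  next
    case Hh thus ?thesis using sf_basis[of "PP n b + 3*n+2" "PP n b + 3*n+2" n b] by (simp add: lev_def L_H[simplified] lenB)
  qed
  thus ?thesis using sf_mono k by blast
qed

lemma sf_supp:
  assumes bas: "is_basis_E n b" and v: "v \<in> nspace n"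
    and h: "\<And>s. s \<in> valid_idx n \<Longrightarrow> v s \<noteq> 0 \<Longrightarrow> (\<forall>i. s \<noteq> Ee i) \<and> k \<le> lev n b s"
  shows "v \<in> sf n b k"
  using v by (rule sf_support) (use h delta_sf[OF bas] in blast)

lemma ns_out: "v \<in> nspace n \<Longrightarrow> r \<notin> valid_idx n \<Longrightarrow> v r = 0"
  by (simp add: nspace_def)

context
  fixes n :: nat and b :: "nat \<Rightarrow> ('k::field) vec" and D :: "'k vec \<Rightarrow> 'k vec"
  assumes bas: "is_basis_E n b" and der: "D \<in> Der1 n"
begin

lemma Dn: "v \<in> nspace n \<Longrightarrow> D v \<in> nspace n"
  using der by (simp add: Der1_def is_derivation_def)

lemma Leib: "v \<in> nspace n \<Longrightarrow> w \<in> nspace n \<Longrightarrow> D (lie n v w) = vadd (lie n (D v) w) (lie n v (D w))"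
  using der by (simp add: Der1_def is_derivation_def)

lemma DE: "v \<in> Espace n \<Longrightarrow> D v (Ee i) = 0"
  using der by (simp add: Der1_def)

lemma D0: "D (\<lambda>_. 0) = (\<lambda>_. 0)"
proof -
  have "D (vscale 0 (delta Aa)) = vscale 0 (D (delta Aa))"
  proof -
    have "delta Aa \<in> nspace n" by (simp add: delta_nspace)
    thus ?thesis using der unfolding Der1_def is_derivation_def by blast
  qed
  thus ?thesis by (simp add: vscale_def)
qed

lemma Dd: "s \<in> valid_idx n \<Longrightarrow> D (delta s) \<in> nspace n"
  by (rule Dn[OF delta_nspace])

lemma Dbr: "p \<in> valid_idx n \<Longrightarrow> q \<in> valid_idx n \<Longrightarrow>
  D (basis_br p q) = vadd (lie n (D (delta p)) (delta q)) (lie n (delta p) (D (delta q)))"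
  using Leib[OF delta_nspace delta_nspace] lie_delta by metis

lemma rel_pos:
  assumes "p \<in> valid_idx n" "q \<in> valid_idx n" "(basis_br p q :: 'k vec) = delta s"
  shows "D (delta s) r = lie n (D (delta p)) (delta q) r + lie n (delta p) (D (delta q)) r"
proof -
  have "D (delta s) = vadd (lie n (D (delta p)) (delta q)) (lie n (delta p) (D (delta q)))"
    using Dbr[OF assms(1,2)] assms(3) by metis
  thus ?thesis by (simp add: vadd_def)
qed

lemma rel_zero:
  assumes "p \<in> valid_idx n" "q \<in> valid_idx n" "(basis_br p q :: 'k vec) = (\<lambda>_. 0)"
  shows "lie n (D (delta p)) (delta q) r + lie n (delta p) (D (delta q)) r = 0"
proof -
  have "vadd (lie n (D (delta p)) (delta q)) (lie n (delta p) (D (delta q))) = (\<lambda>_. 0)"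
    using Dbr[OF assms(1,2)] assms(3) D0 by simp
  thus ?thesis unfolding vadd_def by (rule fun_cong)
qed

lemma br_simps:
  "basis_br Aa Yy = delta Ff" "basis_br Xx Uu = delta Ff" "basis_br Aa Bb = delta Cc"
  "basis_br Aa Cc = delta Hh" "basis_br Bb Uu = delta Hh" "basis_br Bb Yy = delta Hh" "basis_br Xx Yy = delta Hh"
  "basis_br Xx Aa = (\<lambda>_. 0)" "basis_br Xx Bb = (\<lambda>_. 0)" "basis_br Uu Aa = (\<lambda>_. 0)"
  "basis_br Uu Cc = (\<lambda>_. 0)" "basis_br Yy Cc = (\<lambda>_. 0)" "basis_br Uu Yy = (\<lambda>_. 0)"
  by (auto simp: basis_br_def)

lemmas F1 = rel_pos[OF _ _ br_simps(1), simplified]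
lemmas F2 = rel_pos[OF _ _ br_simps(2), simplified]
lemmas C1 = rel_pos[OF _ _ br_simps(3), simplified]
lemmas H1 = rel_pos[OF _ _ br_simps(4), simplified]
lemmas H2 = rel_pos[OF _ _ br_simps(5), simplified]
lemmas H3 = rel_pos[OF _ _ br_simps(6), simplified]
lemmas H4 = rel_pos[OF _ _ br_simps(7), simplified]
lemmas Z1 = rel_zero[OF _ _ br_simps(8), simplified]
lemmas Z2 = rel_zero[OF _ _ br_simps(9), simplified]
lemmas Z3 = rel_zero[OF _ _ br_simps(10), simplified]
lemmas Z4 = rel_zero[OF _ _ br_simps(11), simplified]
lemmas Z5 = rel_zero[OF _ _ br_simps(12), simplified]
lemmas Z6 = rel_zero[OF _ _ br_simps(13), simplified]

lemma delta_apply: "delta q r = (if r = q then 1 else 0)" by (simp add: delta_def)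

lemmas ev = lie_at lieF_def delta_apply

lemma cC: "D (delta Cc) Aa = 0" "D (delta Cc) Bb = 0" "D (delta Cc) Xx = 0" "D (delta Cc) Uu = 0" "D (delta Cc) Yy = 0"
  by (simp_all add: C1 ev)

lemma cA: "D (delta Aa) (Ee j) = 0"
proof (cases "1 \<le> j \<and> j \<le> n")
  case True
  have "D (delta Ff) (Ys j) = D (delta Aa) (Ee j)" using True by (simp add: F1 ev)
  moreover have "D (delta Ff) (Ys j) = 0" using True by (simp add: F2 ev)
  ultimately show ?thesis by simp
qed (simp add: ns_out[OF Dd])

lemma cB1: "D (delta Bb) (Ee j) = 0"
proof (cases "1 \<le> j \<and> j \<le> n")
  case True
  have "D (delta Hh) (Us j) = D (delta Bb) (Ee j)" using True by (simp add: H2 ev)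
  moreover have "D (delta Hh) (Us j) = 0" using True by (simp add: H1 ev)
  ultimately show ?thesis by simp
qed (simp add: ns_out[OF Dd])

lemma hF: "D (delta Hh) Ff = 0" by (simp add: H1 ev cC)

lemma cB2: "D (delta Bb) Aa = 0" "D (delta Bb) Xx = 0"
proof -
  have "D (delta Hh) Ff = D (delta Bb) Xx" by (simp add: H2 ev)
  thus "D (delta Bb) Xx = 0" using hF by simp
  have "D (delta Hh) Ff = D (delta Bb) Aa" by (simp add: H3 ev)
  thus "D (delta Bb) Aa = 0" using hF by simp
qed

lemma cX1: "D (delta Xx) (Ee j) = 0"
proof (cases "1 \<le> j \<and> j \<le> n")
  case True
  have "D (delta Ff) (Us j) = D (delta Xx) (Ee j)" using True by (simp add: F2 ev)
  moreover have "D (delta Ff) (Us j) = 0" using True by (simp add: F1 ev)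
  ultimately show ?thesis by simp
qed (simp add: ns_out[OF Dd])

lemma cX2: "D (delta Xx) Bb = 0" "D (delta Xx) Aa = 0"
  using Z1[of Cc] Z2[of Cc] by (simp_all add: ev)

lemma cU1: "D (delta Uu) (Ee j) = 0"
proof (cases "1 \<le> j \<and> j \<le> n")
  case True
  have "D (delta Ff) (Xs j) = - D (delta Uu) (Ee j)" using True by (simp add: F2 ev)
  moreover have "D (delta Ff) (Xs j) = 0" using True by (simp add: F1 ev)
  ultimately show ?thesis by simp
qed (simp add: ns_out[OF Dd])

lemma cU2: "D (delta Uu) Bb = 0" "D (delta Uu) Aa = 0"
  using Z3[of Cc] Z4[of Hh] by (simp_all add: ev cC)

lemma cY1: "D (delta Yy) Bb = 0"
proof -
  have "D (delta Ff) Cc = D (delta Yy) Bb" by (simp add: F1 ev)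
  moreover have "D (delta Ff) Cc = 0" by (simp add: F2 ev)
  ultimately show ?thesis by simp
qed

lemma cU3: "D (delta Uu) Xx = 0"
  using Z6[of Hh] by (simp add: ev cY1 cU2)

lemma cY2: "D (delta Yy) (Ee j) = 0"
proof (cases "1 \<le> j \<and> j \<le> n")
  case True
  have "D (delta Hh) (Xs j) = - D (delta Yy) (Ee j)" using True by (simp add: H4 ev)
  moreover have "D (delta Hh) (Xs j) = 0" using True by (simp add: H1 ev)
  ultimately show ?thesis by simp
qed (simp add: ns_out[OF Dd])

lemma cY3: "D (delta Yy) Aa = 0" "D (delta Yy) Xx = 0"
  using Z5[of Hh] Z6[of Ff] by (simp_all add: ev cC cU2)

lemma cY4: "D (delta Yy) Uu = 0"
proof -
  have "D (delta Hh) Ff = D (delta Xx) Aa + D (delta Yy) Uu" by (simp add: H4 ev)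
  thus ?thesis using hF cX2 by simp
qed

end

context
  fixes n :: nat and b :: "nat \<Rightarrow> ('k::field) vec" and D :: "'k vec \<Rightarrow> 'k vec"
  assumes bas: "is_basis_E n b" and der: "D \<in> Der1 n"
begin

lemmas ev' = ev[OF bas der]
lemmas cfacts = cC[OF bas der] cA[OF bas der] cB1[OF bas der] cB2[OF bas der] cX1[OF bas der] cX2[OF bas der]
  cU1[OF bas der] cU2[OF bas der] cU3[OF bas der] cY1[OF bas der] cY2[OF bas der] cY3[OF bas der] cY4[OF bas der]

lemma PPge: "n + 5 \<le> PP n b" by (simp add: PP_def)

lemma bi: "1 \<le> i \<Longrightarrow> i \<le> n \<Longrightarrow> b i \<in> Espace n" by (rule basis_Esp[OF bas])

lemma Dbi: "1 \<le> i \<Longrightarrow> i \<le> n \<Longrightarrow> D (b i) \<in> nspace n" "1 \<le> i \<Longrightarrow> i \<le> n \<Longrightarrow> D (b i) (Ee j) = 0"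
  using Dn[OF bas der Esp_nspace[OF bi]] DE[OF bas der bi] by auto

lemma K1: "k < n \<Longrightarrow> D (b (k+1)) \<in> sf n b k"
  apply (rule sf_supp[OF bas Dbi(1)])
    apply simp_all
  subgoal for s using Dbi(2)[of "k+1"] PPge by (cases s) (auto simp: lev_def)
  done

lemma K2: "D (delta Aa) \<in> sf n b n"
  apply (rule sf_supp[OF bas Dd[OF bas der]])
   apply simp
  subgoal for s using PPge by (cases s) (auto simp: lev_def cfacts)
  done

lemma K3: "D (delta Bb) \<in> sf n b (n+1)"
  apply (rule sf_supp[OF bas Dd[OF bas der]])
   apply simp
  subgoal for s using PPge by (cases s) (auto simp: lev_def cfacts)
  done

lemma K4: "D (delta Xx) \<in> sf n b (n+2)"
  apply (rule sf_supp[OF bas Dd[OF bas der]])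
   apply simp
  subgoal for s using PPge by (cases s) (auto simp: lev_def cfacts)
  done

lemma K5: "D (delta Uu) \<in> sf n b (n+3)"
  apply (rule sf_supp[OF bas Dd[OF bas der]])
   apply simp
  subgoal for s using PPge by (cases s) (auto simp: lev_def cfacts)
  done

lemma K6: "D (delta Yy) \<in> sf n b (n+4)"
  apply (rule sf_supp[OF bas Dd[OF bas der]])
   apply simp
  subgoal for s using PPge by (cases s) (auto simp: lev_def cfacts)
  done

lemma K7: "1 \<le> i \<Longrightarrow> i < j \<Longrightarrow> j \<le> n \<Longrightarrow> k < PP n b \<Longrightarrow> D (lie n (b i) (b j)) \<in> sf n b k"
proof -
  assume a: "1 \<le> i" "i < j" "j \<le> n" "k < PP n b"
  have ei: "b i \<in> Espace n" and ej: "b j \<in> Espace n" using a by (auto intro: bi)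
  have eq: "D (lie n (b i) (b j)) = vadd (lie n (D (b i)) (b j)) (lie n (b i) (D (b j)))"
    by (rule Leib[OF bas der Esp_nspace[OF ei] Esp_nspace[OF ej]])
  have zi: "\<And>q. D (b i) (Ee q) = 0" and zj: "\<And>q. D (b j) (Ee q) = 0" using a Dbi(2) by auto
  show ?thesis unfolding eq
    apply (rule sf_supp[OF bas])
     apply (simp add: vadd_def nspace_def lie_invalid)
    subgoal for s using a by (cases s) (auto simp: lev_def vadd_def ev' zi zj Esp_zero[OF ei] Esp_zero[OF ej])
    done
qed

lemma K8: "D (delta Cc) \<in> sf n b (PP n b)"
  apply (rule sf_supp[OF bas Dd[OF bas der]])
   apply simp
  subgoal for s by (cases s) (auto simp: lev_def cfacts C1[OF bas der] ev')
  done

lemma K12: "D (delta Ff) \<in> sf n b (PP n b + 3*n + 1)"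
  apply (rule sf_supp[OF bas Dd[OF bas der]])
   apply simp
  subgoal for s by (cases s) (auto simp: lev_def cfacts F1[OF bas der] ev')
  done

lemma K13: "D (delta Hh) \<in> sf n b (PP n b + 3*n + 2)"
  apply (rule sf_supp[OF bas Dd[OF bas der]])
   apply simp
  subgoal for s by (cases s) (auto simp: lev_def cfacts H1[OF bas der] ev')
  done

lemma lenB': "length (frakB n b) = PP n b + 3*n + 3" by (rule len_frakB)

lemma KXUY:
  assumes i: "1 \<le> i" "i \<le> n" and z: "z \<in> {Xx, Uu, Yy}"
    and k: "k = (if z = Xx then PP n b + i else if z = Uu then PP n b + n + i else PP n b + 2*n + i)"
  shows "D (lie n (b i) (delta z)) \<in> sf n b k"
proof -
  have ei: "b i \<in> Espace n" using i by (rule bi)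
  have zv: "z \<in> valid_idx n" using z by auto
  have eq: "D (lie n (b i) (delta z)) = vadd (lie n (D (b i)) (delta z)) (lie n (b i) (D (delta z)))"
    by (rule Leib[OF bas der Esp_nspace[OF ei] delta_nspace[OF zv]])
  have zi: "\<And>q. D (b i) (Ee q) = 0" using i Dbi(2) by auto
  have kle: "k \<le> PP n b + 3*n + 1" using k i by auto
  have p1: "lie n (D (b i)) (delta z) \<in> sf n b k"
    apply (rule sf_mono[OF kle])
    apply (rule sf_supp[OF bas lie_nspace])
    subgoal for s using z i by (cases s) (auto simp: lev_def ev' zi)
    done
  have lX: "z = Xx \<Longrightarrow> lie n (b i) (delta Xx) \<in> sf n b k"
    using sf_basis[of k "PP n b + i" n b] L_X[OF i, of b] k i by (auto simp: lenB')
  have lY: "lie n (b i) (delta Yy) \<in> sf n b k"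
    using sf_basis[of k "PP n b + 2*n + i" n b] L_Y[OF i, of b] k i by (auto simp: lenB')
  have p2eq: "lie n (b i) (D (delta z)) = (\<lambda>r. D (delta z) Xx * lie n (b i) (delta Xx) r
      + (D (delta z) Uu * lie n (b i) (delta Uu) r + D (delta z) Yy * lie n (b i) (delta Yy) r))"
  proof (rule ext)
    fix r
    have zE: "\<And>q. D (delta z) (Ee q) = 0" using z cfacts by auto
    show "lie n (b i) (D (delta z)) r = D (delta z) Xx * lie n (b i) (delta Xx) r
      + (D (delta z) Uu * lie n (b i) (delta Uu) r + D (delta z) Yy * lie n (b i) (delta Yy) r)"
      by (cases r) (auto simp: ev' zE Esp_zero[OF ei] algebra_simps)
  qed
  have p2: "lie n (b i) (D (delta z)) \<in> sf n b k"
  proof -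
    have "D (delta z) Xx = 0 \<or> z = Xx" "D (delta z) Uu = 0 \<or> z \<noteq> Yy" using z cfacts by auto
    hence "(\<lambda>r. D (delta z) Xx * lie n (b i) (delta Xx) r
      + (D (delta z) Uu * lie n (b i) (delta Uu) r + D (delta z) Yy * lie n (b i) (delta Yy) r)) \<in> sf n b k"
    proof -
      have a1: "(\<lambda>r. D (delta z) Xx * lie n (b i) (delta Xx) r) \<in> sf n b k"
      proof (cases "z = Xx")
        case True thus ?thesis using lX[OF True] by (auto intro: sf_scale)
      next
        case False thus ?thesis using z cfacts sf_zero by auto
      qed
      have a2: "(\<lambda>r. D (delta z) Uu * lie n (b i) (delta Uu) r) \<in> sf n b k"
      proof (cases "z = Yy")
        case False
        hence "k \<le> PP n b + n + i" using k z by auto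
        hence "lie n (b i) (delta Uu) \<in> sf n b k"
          using sf_basis[of k "PP n b + n + i" n b] L_U[OF i, of b] i by (auto simp: lenB')
        thus ?thesis by (rule sf_scale)
      next
        case True thus ?thesis using cfacts sf_zero by auto
      qed
      have a3: "(\<lambda>r. D (delta z) Yy * lie n (b i) (delta Yy) r) \<in> sf n b k"
        using lY by (rule sf_scale)
      show ?thesis by (rule sf_add[OF a1 sf_add[OF a2 a3]])
    qed
    thus ?thesis using p2eq by simp
  qed
  show ?thesis unfolding eq vadd_def by (rule sf_add[OF p1 p2])
qed

end

theorem mainTheorem2:
  fixes n :: nat and b :: "nat \<Rightarrow> ('k::field_char_0) vec" and D :: "'k vec \<Rightarrow> 'k vec"
  assumes "n \<ge> 1"
    and "is_basis_E n b"
    and "D \<in> Der1 n"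
  shows "\<forall>k < length (frakB n b). \<exists>c :: nat \<Rightarrow> 'k.
           D (frakB n b ! k) = (\<lambda>r. \<Sum>j\<in>{k..<length (frakB n b)}. c j * (frakB n b ! j) r)"
proof -
  note bas = assms(2) and der = assms(3)
  let ?P = "PP n b"
  have main: "D (frakB n b ! k) \<in> sf n b k" if k: "k < length (frakB n b)" for k
  proof -
    have kN: "k < ?P + 3*n + 3" using k by (simp add: len_frakB)
    consider (e) "k < n" | (a) "k = n" | (bb) "k = n+1" | (x) "k = n+2" | (u) "k = n+3" | (y) "k = n+4"
      | (w) "n+5 \<le> k" "k < ?P" | (c) "k = ?P" | (xs) "?P < k" "k \<le> ?P + n"
      | (us) "?P + n < k" "k \<le> ?P + 2*n" | (ys) "?P + 2*n < k" "k \<le> ?P + 3*n"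
      | (f) "k = ?P + 3*n + 1" | (h) "k = ?P + 3*n + 2"
      using kN by linarith
    thus ?thesis
    proof cases
      case e thus ?thesis using K1[OF bas der e] L_e[OF e, of b] by simp
    next
      case a thus ?thesis using K2[OF bas der] L_A[of n b] by simp
    next
      case bb thus ?thesis using K3[OF bas der] L_A[of n b] by simp
    next
      case x thus ?thesis using K4[OF bas der] L_A[of n b] by simp
    next
      case u thus ?thesis using K5[OF bas der] L_A[of n b] by simp
    next
      case y thus ?thesis using K6[OF bas der] L_A[of n b] by simp
    next
      case w
      define t where "t = k - (n+5)"
      have t: "t < length (Wl n b)" "k = n + 5 + t" using w by (auto simp: t_def PP_def)
      have "frakB n b ! k = Wl n b ! t" using L_W[OF t(1)] t(2) by simp
      hence "frakB n b ! k \<in> set (Wl n b)" using t(1) by simp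
      then obtain i j where ij: "1 \<le> i" "i < j" "j \<le> n" "frakB n b ! k = lie n (b i) (b j)"
        using Wl_set by blast
      thus ?thesis using K7[OF bas der ij(1-3) w(2)] by simp
    next
      case c thus ?thesis using K8[OF bas der] L_C[of n b] by simp
    next
      case xs
      define i where "i = k - ?P"
      have i: "1 \<le> i" "i \<le> n" "k = ?P + i" using xs by (auto simp: i_def)
      thus ?thesis using KXUY[OF bas der i(1,2), of Xx k] L_X[OF i(1,2), of b] by simp
    next
      case us
      define i where "i = k - ?P - n"
      have i: "1 \<le> i" "i \<le> n" "k = ?P + n + i" using us by (auto simp: i_def)
      thus ?thesis using KXUY[OF bas der i(1,2), of Uu k] L_U[OF i(1,2), of b] by simp
    next
      case ys
      define i where "i = k - ?P - 2*n"
      have i: "1 \<le> i" "i \<le> n" "k = ?P + 2*n + i" using ys by (auto simp: i_def)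
      thus ?thesis using KXUY[OF bas der i(1,2), of Yy k] L_Y[OF i(1,2), of b] by simp
    next
      case f thus ?thesis using K12[OF bas der] L_F[of n b] by simp
    next
      case h thus ?thesis using K13[OF bas der] L_H[of n b] by simp
    qed
  qed
  show ?thesis
  proof (intro allI impI)
    fix k assume "k < length (frakB n b)"
    from main[OF this] show "\<exists>c :: nat \<Rightarrow> 'k.
           D (frakB n b ! k) = (\<lambda>r. \<Sum>j\<in>{k..<length (frakB n b)}. c j * (frakB n b ! j) r)"
      by (simp add: sf_def)
  qed
qed

end
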